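(* Let $\mathfrak g$ be of type $A_n$ and $J\subseteq I$. Then for $s\ge1$ $$\mathbf A_{s,J}=\bigl\{\{\alpha_{i_k,j_k}\}_{1\le k\le s}\in\mathbf A_s:\ i_k,j_k\notin J\text{ for all }k\bigr\}.$$ In particular $\#\mathbf A_{s,J}=\binom{n-\#J}{2s}+\binom{n-\#J}{2s-1}$ for $s\ge1$ and $\sum_{s\ge0}\#\mathbf A_{s,J}=2^{n-\#J}$.
   Context: Simple roots $\alpha_1,\dots,\alpha_n$ of $A_n$ numbered as in Bourbaki, $I=\{1,\dots,n\}$; $\alpha_{i,j}=\alpha_i+\dots+\alpha_j$ for $i\le j$, $\theta=\alpha_{1,n}$. For $\eta=\sum_i d_i(\eta)\alpha_i$, $R^+(J)=\{\alpha\in R^+:d_i(\alpha)=0\ \forall i\notin J\}$. A $J$-antichain is a subset $A\subseteq R^+$ with $A\cap R^+(J)=\emptyset$, distinct elements pairwise incomparable (order: $\lambda\le\mu$ iff $\mu-\lambda$ is a nonnegative integer combination of simple roots), and $\alpha-\alpha_j\notin R$ for $\alpha\in A$, $j\in J$. $\Phi(A)=\{\alpha\in R^+:\alpha\ge\beta$ for some $\beta\in A\}$; $A$ is abelian if $\beta_1+\beta_2\notin R$ for all $\beta_1,\beta_2\in\Phi(A)$. $\mathbf A_{s,J}$ is the set of abelian $J$-antichains with $s$ elements, $\mathbf A_{0,J}$ consists of the empty antichain, and $\mathbf A_s=\mathbf A_{s,\emptyset}$, which equals $\{\{\alpha_{i_k,j_k}\}_{1\le k\le s}: i_1<\dots<i_s\le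 j_1<\dots<j_s\}$. Convention: $\binom{m}{k}=0$ if $k>m$. *)

theory Defs
  imports Complex_Main
begin

text \<open>An element eta = sum_i d_i(eta) alpha_i of the root
lattice is represented by its coefficient function (d_i(eta))_i :: nat => int
(only indices in I = {1..n} are ever nonzero for roots).\<close>

type_synonym rootvec = "nat \<Rightarrow> int"

definition alpha :: "nat \<Rightarrow> nat \<Rightarrow> rootvec" where
  "alpha i j = (\<lambda>k. if i \<le> k \<and> k \<le> j then 1 else 0)"

definition simple :: "nat \<Rightarrow> rootvec" where
  "simple j = (\<lambda>k. if k = j then 1 else 0)"

definition posroots :: "nat \<Rightarrow> rootvec set" where
  "posroots n = {alpha i j | i j. 1 \<le> i \<and> i \<le> j \<and> j \<le> n}"

definition roots :: "nat \<Rightarrow> rootvec set" where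
  "roots n = posroots n \<union> (\<lambda>a k. - a k) ` posroots n"

text \<open>lambda <= mu iff mu - lambda is a nonnegative integer combination of simple roots,
i.e. all its coefficients are nonnegative.\<close>
definition root_le :: "rootvec \<Rightarrow> rootvec \<Rightarrow> bool" where
  "root_le l m = (\<forall>k. l k \<le> m k)"

definition posroots_J :: "nat \<Rightarrow> nat set \<Rightarrow> rootvec set" where
  "posroots_J n J = {a \<in> posroots n. \<forall>i \<in> {1..n} - J. a i = 0}"

definition J_antichain :: "nat \<Rightarrow> nat set \<Rightarrow> rootvec set \<Rightarrow> bool" where
  "J_antichain n J A \<longleftrightarrow>
     A \<subseteq> posroots n \<and> A \<inter> posroots_J n J = {} \<and>
     (\<forall>b1\<in>A. \<forall>b2\<in>A. b1 \<noteq> b2 \<longrightarrow> \<not> root_le b1 b2) \<and>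
     (\<forall>a\<in>A. \<forall>j\<in>J. (\<lambda>k. a k - simple j k) \<notin> roots n)"

definition Phi :: "nat \<Rightarrow> rootvec set \<Rightarrow> rootvec set" where
  "Phi n A = {a \<in> posroots n. \<exists>b\<in>A. root_le b a}"

definition abelian :: "nat \<Rightarrow> rootvec set \<Rightarrow> bool" where
  "abelian n A \<longleftrightarrow> (\<forall>b1\<in>Phi n A. \<forall>b2\<in>Phi n A. (\<lambda>k. b1 k + b2 k) \<notin> roots n)"

definition AsJ :: "nat \<Rightarrow> nat \<Rightarrow> nat set \<Rightarrow> rootvec set set" where
  "AsJ n s J = {A. J_antichain n J A \<and> abelian n A \<and> finite A \<and> card A = s}"

end

theory Submission
  imports Defs
begin


lemma alpha_eq:
  assumes "a \<le> b" "alpha i j = alpha a b" shows "i = a \<and> j = b"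
proof -
  have e: "\<And>x. alpha i j x = alpha a b x" using assms(2) by simp
  from e[of a] e[of b] e[of i] e[of j] assms(1) show ?thesis
    unfolding alpha_def by (auto split: if_splits)
qed

lemma root_le_alpha:
  assumes "i \<le> j" shows "root_le (alpha i j) (alpha k l) \<longleftrightarrow> k \<le> i \<and> j \<le> l"
proof
  assume "root_le (alpha i j) (alpha k l)"
  then have "alpha i j i \<le> alpha k l i" "alpha i j j \<le> alpha k l j" unfolding root_le_def by auto
  with assms show "k \<le> i \<and> j \<le> l" unfolding alpha_def by (auto split: if_splits)
qed (auto simp: root_le_def alpha_def)

lemma roots_le1: "r \<in> roots n \<Longrightarrow> r x \<le> 1"
  unfolding roots_def posroots_def alpha_def by auto

lemma diff_not_root:
  assumes "i \<le> j" "l \<noteq> i" "l \<noteq> j"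
  shows "(\<lambda>k. alpha i j k - simple l k) \<notin> roots n"
proof
  let ?v = "\<lambda>k. alpha i j k - simple l k"
  assume "?v \<in> roots n"
  then consider a b where "?v = alpha a b" | a b where "?v = (\<lambda>k. - alpha a b k)"
    unfolding roots_def posroots_def by auto
  then show False
  proof cases
    case 1
    then have e: "\<And>x. ?v x = alpha a b x" by metis
    from e[of i] e[of j] e[of l] assms show False
      unfolding alpha_def simple_def by (auto split: if_splits)
  next
    case 2
    then have e: "\<And>x. ?v x = - alpha a b x" by metis
    from e[of i] assms show False
      unfolding alpha_def simple_def by (auto split: if_splits)
  qed
qed

lemma alpha_add: "k \<le> m \<Longrightarrow> Suc m \<le> j \<Longrightarrow> (\<lambda>x. alpha k m x + alpha (Suc m) j x) = alpha k j"
  unfolding alpha_def fun_eq_iff by auto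

definition valid :: "nat \<Rightarrow> (nat \<times> nat) set" where
  "valid n = {(i,j). 1 \<le> i \<and> i \<le> j \<and> j \<le> n}"

definition aimg :: "(nat \<times> nat) set \<Rightarrow> rootvec set" where
  "aimg P = (\<lambda>(i,j). alpha i j) ` P"

definition good :: "nat set \<Rightarrow> nat \<Rightarrow> (nat \<times> nat) set set" where
  "good K s = {P. P \<subseteq> {(i,j). i \<in> K \<and> j \<in> K \<and> i \<le> j} \<and> card P = s
     \<and> (\<forall>i j k l. (i,j) \<in> P \<longrightarrow> (k,l) \<in> P \<longrightarrow> (i,j) \<noteq> (k,l) \<longrightarrow> \<not> (k \<le> i \<and> j \<le> l))
     \<and> (\<forall>i j k l. (i,j) \<in> P \<longrightarrow> (k,l) \<in> P \<longrightarrow> i \<le> l)}"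

lemma inj_alpha: "inj_on (\<lambda>(i,j). alpha i j) {(i,j). i \<le> j}"
  by (auto simp: inj_on_def dest: alpha_eq)

lemma posroots_valid: "posroots n = aimg (valid n)"
  unfolding posroots_def aimg_def valid_def by auto

lemma good_finite: "finite K \<Longrightarrow> P \<in> good K s \<Longrightarrow> finite P"
  unfolding good_def by (auto intro: finite_subset[of _ "K \<times> K"])

lemma aimg_mem: "x \<in> aimg P \<longleftrightarrow> (\<exists>i j. (i,j) \<in> P \<and> x = alpha i j)"
  unfolding aimg_def by auto

lemma charac:
  assumes J: "J \<subseteq> {1..n}"
  shows "AsJ n s J = aimg ` good ({1..n} - J) s"
proof
  show "AsJ n s J \<subseteq> aimg ` good ({1..n} - J) s"
  proof
    fix A assume "A \<in> AsJ n s J"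
    then have ac: "J_antichain n J A" and ab: "abelian n A" and fA: "finite A" and cA: "card A = s"
      unfolding AsJ_def by auto
    from ac have Apos: "A \<subseteq> posroots n" and AJ: "A \<inter> posroots_J n J = {}"
      and anti: "\<forall>b1\<in>A. \<forall>b2\<in>A. b1 \<noteq> b2 \<longrightarrow> \<not> root_le b1 b2"
      and jc: "\<forall>a\<in>A. \<forall>j\<in>J. (\<lambda>k. a k - simple j k) \<notin> roots n"
      unfolding J_antichain_def by auto
    define P where "P = {(i,j). (i,j) \<in> valid n \<and> alpha i j \<in> A}"
    have AP: "A = aimg P"
    proof
      show "A \<subseteq> aimg P"
      proof
        fix x assume "x \<in> A"
        with Apos obtain i j where "(i,j) \<in> valid n" "x = alpha i j"
          unfolding posroots_valid aimg_def by auto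
        with \<open>x \<in> A\<close> show "x \<in> aimg P" unfolding P_def aimg_def by auto
      qed
    qed (auto simp: P_def aimg_def)
    have Pv: "P \<subseteq> {(i,j). i \<le> j}" unfolding P_def valid_def by auto
    have injP: "inj_on (\<lambda>(i,j). alpha i j) P" using inj_on_subset[OF inj_alpha Pv] .
    have cP: "card P = s" using cA card_image[OF injP] AP unfolding aimg_def by simp
    have notJ: "i \<notin> J \<and> j \<notin> J" if ij: "(i,j) \<in> P" for i j
    proof -
      from ij have v: "1 \<le> i" "i \<le> j" "j \<le> n" and aA: "alpha i j \<in> A"
        unfolding P_def valid_def by auto
      have pr: "alpha i j \<in> posroots n" using aA Apos by auto
      show ?thesis
      proof (cases "i = j")
        case True
        have "alpha i j \<notin> posroots_J n J" using AJ aA by auto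
        with pr True have "i \<notin> J" unfolding posroots_J_def alpha_def by (auto split: if_splits)
        with True show ?thesis by simp
      next
        case False
        have "i \<notin> J"
        proof
          assume "i \<in> J"
          have "(\<lambda>k. alpha i j k - simple i k) = alpha (Suc i) j"
            using False v unfolding alpha_def simple_def by auto
          moreover have "alpha (Suc i) j \<in> roots n"
            using False v unfolding roots_def posroots_def by (intro UnI1) force
          ultimately show False using jc aA \<open>i \<in> J\<close> by metis
        qed
        moreover have "j \<notin> J"
        proof
          assume "j \<in> J"
          have "(\<lambda>k. alpha i j k - simple j k) = alpha i (j - 1)"
            using False v unfolding alpha_def simple_def by (simp add: fun_eq_iff) arith
          moreover have "alpha i (j - 1) \<in> roots n"
            using False v unfolding roots_def posroots_def by (intro UnI1) force
          ultimately show False using jc aA \<open>j \<in> J\<close> by metis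
        qed
        ultimately show ?thesis by simp
      qed
    qed
    have PK: "P \<subseteq> {(i,j). i \<in> {1..n} - J \<and> j \<in> {1..n} - J \<and> i \<le> j}"
      using notJ unfolding P_def valid_def by auto
    have antiP: "\<not> (k \<le> i \<and> j \<le> l)" if "(i,j) \<in> P" "(k,l) \<in> P" "(i,j) \<noteq> (k,l)" for i j k l
    proof -
      have "alpha i j \<noteq> alpha k l" using that Pv alpha_eq by blast
      then have "\<not> root_le (alpha i j) (alpha k l)" using anti that unfolding P_def by auto
      then show ?thesis using root_le_alpha that Pv by blast
    qed
    have interP: "i \<le> l" if "(i,j) \<in> P" "(k,l) \<in> P" for i j k l
    proof (rule ccontr)
      assume "\<not> i \<le> l"
      from that have v: "1 \<le> i" "i \<le> j" "j \<le> n" "1 \<le> k" "k \<le> l" "l \<le> n"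
        and A1: "alpha i j \<in> A" and A2: "alpha k l \<in> A" unfolding P_def valid_def by auto
      have "alpha k (i - 1) \<in> posroots n"
        unfolding posroots_def using v \<open>\<not> i \<le> l\<close>
        by (intro CollectI exI[of _ k] exI[of _ "i - 1"]) auto
      moreover have "root_le (alpha k l) (alpha k (i - 1))"
        using root_le_alpha[of k l k "i - 1"] v \<open>\<not> i \<le> l\<close> by auto
      ultimately have "alpha k (i - 1) \<in> Phi n A"
        unfolding Phi_def using A2 by auto
      moreover have "alpha i j \<in> Phi n A"
        unfolding Phi_def posroots_def using v A1 by (auto simp: root_le_def)
      moreover have "(\<lambda>x. alpha k (i - 1) x + alpha i j x) = alpha k j"
        using alpha_add[of k "i - 1" j] v \<open>\<not> i \<le> l\<close> by simp
      moreover have "alpha k j \<in> roots n"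
        using v \<open>\<not> i \<le> l\<close> unfolding roots_def posroots_def by (intro UnI1) force
      ultimately show False using ab unfolding abelian_def by metis
    qed
    have "P \<in> good ({1..n} - J) s"
      unfolding good_def using PK cP antiP interP by blast
    then show "A \<in> aimg ` good ({1..n} - J) s" using AP by blast
  qed
next
  show "aimg ` good ({1..n} - J) s \<subseteq> AsJ n s J"
  proof
    fix A assume "A \<in> aimg ` good ({1..n} - J) s"
    then obtain P where AP: "A = aimg P" and G: "P \<in> good ({1..n} - J) s" by blast
    have g: "P \<subseteq> {(i,j). i \<in> {1..n} - J \<and> j \<in> {1..n} - J \<and> i \<le> j} \<and> card P = s
     \<and> (\<forall>i j k l. (i,j) \<in> P \<longrightarrow> (k,l) \<in> P \<longrightarrow> (i,j) \<noteq> (k,l) \<longrightarrow> \<not> (k \<le> i \<and> j \<le> l))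
     \<and> (\<forall>i j k l. (i,j) \<in> P \<longrightarrow> (k,l) \<in> P \<longrightarrow> i \<le> l)"
      using G unfolding good_def by (rule CollectD)
    then have PK: "P \<subseteq> {(i,j). i \<in> {1..n} - J \<and> j \<in> {1..n} - J \<and> i \<le> j}"
      and cP: "card P = s" by blast+
    have antiP: "\<And>i j k l. (i,j) \<in> P \<Longrightarrow> (k,l) \<in> P \<Longrightarrow> (i,j) \<noteq> (k,l) \<Longrightarrow> \<not> (k \<le> i \<and> j \<le> l)"
      using g by blast
    have interP: "\<And>i j k l. (i,j) \<in> P \<Longrightarrow> (k,l) \<in> P \<Longrightarrow> i \<le> l"
      using g by blast
    have fP: "finite P" by (rule good_finite[OF _ G]) simp
    have Pv: "P \<subseteq> {(i,j). i \<le> j}" using PK by auto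
    have injP: "inj_on (\<lambda>(i,j). alpha i j) P" using inj_on_subset[OF inj_alpha Pv] .
    have cA: "card A = s" using cP card_image[OF injP] AP unfolding aimg_def by simp
    have fA: "finite A" using fP AP unfolding aimg_def by simp
    have Apos: "A \<subseteq> posroots n"
    proof
      fix a assume "a \<in> A"
      then obtain i j where "(i,j) \<in> P" "a = alpha i j" using AP aimg_mem by blast
      with PK have "1 \<le> i" "i \<le> j" "j \<le> n" "a = alpha i j" by auto
      then show "a \<in> posroots n" unfolding posroots_def by blast
    qed
    have AJ: "A \<inter> posroots_J n J = {}"
    proof (rule ccontr)
      assume "A \<inter> posroots_J n J \<noteq> {}"
      then obtain a where a: "a \<in> A" "a \<in> posroots_J n J" by blast
      then obtain i j where "(i,j) \<in> P" "a = alpha i j" using AP aimg_mem by blast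
      with a have "(i,j) \<in> P" "alpha i j \<in> posroots_J n J" by auto
      then have ij: "(i,j) \<in> P" and z: "\<forall>k \<in> {1..n} - J. alpha i j k = 0"
        unfolding posroots_J_def by auto
      from ij PK have "i \<in> {1..n} - J" "i \<le> j" by auto
      with z have "alpha i j i = 0" by blast
      with \<open>i \<le> j\<close> show False unfolding alpha_def by simp
    qed
    have anti: "\<forall>b1\<in>A. \<forall>b2\<in>A. b1 \<noteq> b2 \<longrightarrow> \<not> root_le b1 b2"
    proof (intro ballI impI)
      fix b1 b2 assume "b1 \<in> A" "b2 \<in> A" "b1 \<noteq> b2"
      obtain i j where "(i,j) \<in> P" "b1 = alpha i j"
        using AP aimg_mem \<open>b1 \<in> A\<close> by blast
      moreover obtain k l where "(k,l) \<in> P" "b2 = alpha k l"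
        using AP aimg_mem \<open>b2 \<in> A\<close> by blast
      ultimately have *: "(i,j) \<in> P" "(k,l) \<in> P" "b1 = alpha i j" "b2 = alpha k l" by auto
      have "(i,j) \<noteq> (k,l)" using * \<open>b1 \<noteq> b2\<close> by auto
      have "i \<le> j" using *(1) Pv by auto
      show "\<not> root_le b1 b2"
      proof
        assume "root_le b1 b2"
        then have "k \<le> i \<and> j \<le> l" using root_le_alpha[OF \<open>i \<le> j\<close>] *(3,4) by simp
        then show False using antiP[OF *(1,2) \<open>(i,j) \<noteq> (k,l)\<close>] by simp
      qed
    qed
    have jc: "\<forall>a\<in>A. \<forall>j\<in>J. (\<lambda>k. a k - simple j k) \<notin> roots n"
    proof (intro ballI)
      fix a l assume "a \<in> A" "l \<in> J"
      then obtain i j where "(i,j) \<in> P" "a = alpha i j" using AP aimg_mem by blast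
      with PK \<open>l \<in> J\<close> show "(\<lambda>k. a k - simple l k) \<notin> roots n"
        using diff_not_root[of i j l n] by auto
    qed
    have ab: "abelian n A"
      unfolding abelian_def
    proof (intro ballI)
      fix b1 b2 assume "b1 \<in> Phi n A" "b2 \<in> Phi n A"
      then obtain a1 a2 where "a1 \<in> A" "a2 \<in> A" "root_le a1 b1" "root_le a2 b2"
        unfolding Phi_def by auto
      note a = this
      obtain i j where ij1: "(i,j) \<in> P" "a1 = alpha i j"
        using AP aimg_mem a(1) by blast
      obtain k l where ij2: "(k,l) \<in> P" "a2 = alpha k l"
        using AP aimg_mem a(2) by blast
      have ij: "(i,j) \<in> P" "(k,l) \<in> P" using ij1 ij2 by auto
      have r: "root_le (alpha i j) b1" "root_le (alpha k l) b2" using a(3,4) ij1(2) ij2(2) by simp_all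
      define p where "p = max i k"
      have "i \<le> p" "p \<le> j" "k \<le> p" "p \<le> l"
        using interP[OF ij(1) ij(2)] interP[OF ij(2) ij(1)] interP[OF ij(1) ij(1)]
          interP[OF ij(2) ij(2)] unfolding p_def by auto
      then have e1: "alpha i j p = 1" and e2: "alpha k l p = 1" unfolding alpha_def by auto
      have "alpha i j p \<le> b1 p" using r(1) unfolding root_le_def by blast
      moreover have "alpha k l p \<le> b2 p" using r(2) unfolding root_le_def by blast
      ultimately have "b1 p + b2 p > 1" using e1 e2 by linarith
      then show "(\<lambda>k. b1 k + b2 k) \<notin> roots n" using roots_le1[of "\<lambda>k. b1 k + b2 k" n p] by auto
    qed
    have "J_antichain n J A" unfolding J_antichain_def using Apos AJ anti jc by (intro conjI)
    then show "A \<in> AsJ n s J"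
      unfolding AsJ_def using ab fA cA by (intro CollectI conjI)
  qed
qed



definition Fm :: "nat \<Rightarrow> nat set \<Rightarrow> (nat \<times> nat) set" where
  "Fm s S = (let xs = sorted_list_of_set S in set (zip (take s xs) (drop (card S - s) xs)))"

definition Gm :: "(nat \<times> nat) set \<Rightarrow> nat set" where
  "Gm P = fst ` P \<union> snd ` P"

lemma Fm_props:
  assumes K: "finite K" and SK: "S \<subseteq> K" and s1: "1 \<le> s"
    and cS: "card S = 2*s \<or> card S = 2*s - 1"
  shows "Fm s S \<in> good K s \<and> Gm (Fm s S) = S"
proof -
  define xs where "xs = sorted_list_of_set S"
  define c where "c = card S"
  define d where "d = c - s"
  have fS: "finite S" using K SK finite_subset by blast
  have sx: "sorted_wrt (<) xs" unfolding xs_def by simp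
  have setx: "set xs = S" unfolding xs_def using fS by simp
  have lx: "length xs = c" unfolding xs_def c_def by simp
  have dle: "d \<le> s" "s - 1 \<le> d" "d + s = c" "s \<le> c" using cS s1 unfolding d_def c_def by auto
  have lt: "xs ! a < xs ! b" if "a < b" "b < c" for a b
    using sx that lx unfolding sorted_wrt_iff_nth_less by auto
  have le: "xs ! a \<le> xs ! b" if "a \<le> b" "b < c" for a b
    using lt[of a b] that by (cases "a = b") auto
  have inK: "xs ! a \<in> K" if "a < c" for a
    using that lx setx SK nth_mem by blast
  have lt1: "length (take s xs) = s" using lx dle by simp
  have lt2: "length (drop d xs) = s" using lx dle by simp
  have F: "Fm s S = set (zip (take s xs) (drop d xs))"
    unfolding Fm_def xs_def d_def c_def by (simp add: Let_def)
  have mem: "p \<in> Fm s S \<longleftrightarrow> (\<exists>a<s. p = (xs ! a, xs ! (d + a)))" for p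
  proof -
    have "p \<in> Fm s S \<longleftrightarrow> (\<exists>a. take s xs ! a = fst p \<and> drop d xs ! a = snd p \<and> a < s)"
      unfolding F in_set_zip using lt1 lt2 lx dle by auto
    also have "\<dots> \<longleftrightarrow> (\<exists>a<s. p = (xs ! a, xs ! (d + a)))"
      using lx dle by (cases p) (auto simp: nth_take nth_drop; metis nth_take)
    finally show ?thesis .
  qed
  have sub: "Fm s S \<subseteq> {(i,j). i \<in> K \<and> j \<in> K \<and> i \<le> j}"
  proof
    fix p assume "p \<in> Fm s S"
    then obtain a where a: "a < s" "p = (xs ! a, xs ! (d + a))" using mem by blast
    then show "p \<in> {(i,j). i \<in> K \<and> j \<in> K \<and> i \<le> j}"
      using inK[of a] inK[of "d + a"] le[of a "d + a"] dle by auto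
  qed
  have dist: "distinct (zip (take s xs) (drop d xs))"
    by (rule distinct_zipI1) (use sx strict_sorted_iff in \<open>auto intro: distinct_take\<close>)
  have card: "card (Fm s S) = s"
    unfolding F using distinct_card[OF dist] lt1 lt2 by simp
  have anti: "\<forall>i j k l. (i,j) \<in> Fm s S \<longrightarrow> (k,l) \<in> Fm s S \<longrightarrow> (i,j) \<noteq> (k,l) \<longrightarrow> \<not> (k \<le> i \<and> j \<le> l)"
  proof (intro allI impI)
    fix i j k l assume "(i,j) \<in> Fm s S" "(k,l) \<in> Fm s S" "(i,j) \<noteq> (k,l)"
    then obtain a b where ab: "a < s" "(i,j) = (xs ! a, xs ! (d + a))" "b < s" "(k,l) = (xs ! b, xs ! (d + b))"
      using mem by meson
    then have "a \<noteq> b" using \<open>(i,j) \<noteq> (k,l)\<close> by auto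
    then consider "a < b" | "b < a" by linarith
    then show "\<not> (k \<le> i \<and> j \<le> l)"
    proof cases
      case 1 then have "xs ! a < xs ! b" using lt ab dle by simp
      then show ?thesis using ab by auto
    next
      case 2 then have "xs ! (d + b) < xs ! (d + a)" using lt ab dle by simp
      then show ?thesis using ab by auto
    qed
  qed
  have inter: "\<forall>i j k l. (i,j) \<in> Fm s S \<longrightarrow> (k,l) \<in> Fm s S \<longrightarrow> i \<le> l"
  proof (intro allI impI)
    fix i j k l assume "(i,j) \<in> Fm s S" "(k,l) \<in> Fm s S"
    then obtain a b where ab: "a < s" "(i,j) = (xs ! a, xs ! (d + a))" "b < s" "(k,l) = (xs ! b, xs ! (d + b))"
      using mem by meson
    then have "xs ! a \<le> xs ! (d + b)" using le[of a "d + b"] dle by simp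
    then show "i \<le> l" using ab by simp
  qed
  have G: "Gm (Fm s S) = S"
  proof -
    have "fst ` Fm s S = set (take s xs)"
      unfolding F using lt1 lt2 by (metis map_fst_zip set_map)
    moreover have "snd ` Fm s S = set (drop d xs)"
      unfolding F using lt1 lt2 by (metis map_snd_zip set_map)
    moreover have "set (take s xs) \<union> set (drop d xs) = set xs"
    proof
      show "set (take s xs) \<union> set (drop d xs) \<subseteq> set xs"
        by (meson Un_least set_drop_subset set_take_subset)
      have "set xs = set (take s xs) \<union> set (drop s xs)"
        by (metis append_take_drop_id set_append)
      moreover have "set (drop s xs) \<subseteq> set (drop d xs)"
        by (rule set_drop_subset_set_drop[OF dle(1)])
      ultimately show "set xs \<subseteq> set (take s xs) \<union> set (drop d xs)" by blast
    qed
    ultimately show ?thesis unfolding Gm_def using setx by simp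
  qed
  show ?thesis using sub card anti inter G unfolding good_def by blast
qed

lemma good_D:
  assumes "P \<in> good K s"
  shows "P \<subseteq> {(i,j). i \<in> K \<and> j \<in> K \<and> i \<le> j}" "card P = s"
    "\<And>i j k l. (i,j) \<in> P \<Longrightarrow> (k,l) \<in> P \<Longrightarrow> (i,j) \<noteq> (k,l) \<Longrightarrow> \<not> (k \<le> i \<and> j \<le> l)"
    "\<And>i j k l. (i,j) \<in> P \<Longrightarrow> (k,l) \<in> P \<Longrightarrow> i \<le> l"
proof -
  have g: "P \<subseteq> {(i,j). i \<in> K \<and> j \<in> K \<and> i \<le> j} \<and> card P = s
     \<and> (\<forall>i j k l. (i,j) \<in> P \<longrightarrow> (k,l) \<in> P \<longrightarrow> (i,j) \<noteq> (k,l) \<longrightarrow> \<not> (k \<le> i \<and> j \<le> l))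
     \<and> (\<forall>i j k l. (i,j) \<in> P \<longrightarrow> (k,l) \<in> P \<longrightarrow> i \<le> l)"
    using assms unfolding good_def by (rule CollectD)
  then show "P \<subseteq> {(i,j). i \<in> K \<and> j \<in> K \<and> i \<le> j}" "card P = s" by blast+
  show "\<And>i j k l. (i,j) \<in> P \<Longrightarrow> (k,l) \<in> P \<Longrightarrow> (i,j) \<noteq> (k,l) \<Longrightarrow> \<not> (k \<le> i \<and> j \<le> l)"
    using g by blast
  show "\<And>i j k l. (i,j) \<in> P \<Longrightarrow> (k,l) \<in> P \<Longrightarrow> i \<le> l"
    using g by blast
qed

lemma zip_map_self: "zip xs (map g xs) = map (\<lambda>i. (i, g i)) xs"
  by (induction xs) auto

lemma Gm_props:
  assumes K: "finite K" and G: "P \<in> good K s" and s1: "1 \<le> s"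
  shows "Gm P \<subseteq> K \<and> (card (Gm P) = 2*s \<or> card (Gm P) = 2*s - 1) \<and> Fm s (Gm P) = P"
proof -
  note PK = good_D(1)[OF G] and cP = good_D(2)[OF G]
    and antiP = good_D(3)[OF G] and interP = good_D(4)[OF G]
  have fP: "finite P" by (rule good_finite[OF K G])
  define L where "L = fst ` P"
  define R where "R = snd ` P"
  have fL: "finite L" "finite R" unfolding L_def R_def using fP by auto
  have uniq: "j = l" if "(i,j) \<in> P" "(i,l) \<in> P" for i j l
  proof (rule ccontr)
    assume "j \<noteq> l"
    then consider "j < l" | "l < j" by linarith
    then show False
    proof cases
      case 1 then show False using antiP[OF that(1) that(2)] \<open>j \<noteq> l\<close> by simp
    next
      case 2 then show False using antiP[OF that(2) that(1)] \<open>j \<noteq> l\<close> by simp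
    qed
  qed
  have mono: "j < l" if "(i,j) \<in> P" "(k,l) \<in> P" "i < k" for i j k l
  proof (rule ccontr)
    assume "\<not> j < l"
    then have "(k,l) \<noteq> (i,j)" using that by auto
    from antiP[OF that(2) that(1) this] \<open>\<not> j < l\<close> that(3) show False by simp
  qed
  define g where "g i = (THE j. (i,j) \<in> P)" for i
  have gP: "(i, g i) \<in> P" if "i \<in> L" for i
  proof -
    from that obtain j where ij: "(i,j) \<in> P" unfolding L_def by force
    then have "(i, THE j. (i,j) \<in> P) \<in> P" by (rule theI) (use ij uniq in blast)
    then show ?thesis unfolding g_def .
  qed
  have gu: "g i = j" if "(i,j) \<in> P" for i j
  proof -
    have "i \<in> L" using that unfolding L_def by force
    then show ?thesis using gP uniq that by blast
  qed
  have Pg: "P = (\<lambda>i. (i, g i)) ` L"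
  proof
    show "P \<subseteq> (\<lambda>i. (i, g i)) ` L"
    proof
      fix p assume "p \<in> P"
      then obtain i j where p: "p = (i,j)" "(i,j) \<in> P" by (cases p) auto
      then have "i \<in> L" "g i = j" using gu unfolding L_def by force+
      then show "p \<in> (\<lambda>i. (i, g i)) ` L" using p by blast
    qed
    show "(\<lambda>i. (i, g i)) ` L \<subseteq> P" using gP by blast
  qed
  have Rg: "R = g ` L"
    unfolding R_def by (subst Pg) (simp add: image_image)
  have injf: "inj_on fst P" unfolding inj_on_def using uniq by auto
  have cL: "card L = s" unfolding L_def using card_image[OF injf] cP by simp
  have gmono: "g x < g y" if "x \<in> L" "y \<in> L" "x < y" for x y
    using mono[OF gP[OF that(1)] gP[OF that(2)] that(3)] .
  have LR: "x \<le> y" if "x \<in> L" "y \<in> R" for x y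
    using that interP unfolding L_def R_def by force
  define ls where "ls = sorted_list_of_set L"
  define rs where "rs = sorted_list_of_set R"
  have sls: "sorted_wrt (<) ls" "set ls = L" "length ls = s"
    unfolding ls_def using fL cL by auto
  have srs0: "sorted_wrt (<) (map g ls)"
    unfolding sorted_wrt_map
    by (rule sorted_wrt_mono_rel[OF _ sls(1)]) (use gmono sls(2) in blast)
  have dsg: "distinct (map g ls)" using srs0 strict_sorted_iff by blast
  have cR: "card R = s" using distinct_card[OF dsg] sls Rg by simp
  have rsg: "rs = map g ls"
  proof -
    have "sorted_wrt (<) (map g ls) \<and> set (map g ls) = R \<and> length (map g ls) = card R"
      using srs0 sls Rg cR by simp
    then show ?thesis unfolding rs_def using sorted_list_of_set_unique[OF fL(2), of "map g ls"] by blast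
  qed
  have srs: "sorted_wrt (<) rs" "set rs = R" "length rs = s"
    using srs0 rsg sls Rg by auto
  have Pz: "P = set (zip ls rs)"
    unfolding rsg zip_map_self using Pg sls(2) by simp
  have GP: "Gm P = L \<union> R" unfolding Gm_def L_def R_def by simp
  have GK: "Gm P \<subseteq> K" unfolding GP L_def R_def using PK by auto
  have ls_ne: "ls \<noteq> []" using sls(3) s1 by auto
  have rs_ne: "rs \<noteq> []" using srs(3) s1 by auto
  show ?thesis
  proof (cases "L \<inter> R = {}")
    case True
    have sa: "sorted_wrt (<) (ls @ rs)"
      unfolding sorted_wrt_append using sls srs LR True by force
    have dA: "distinct (ls @ rs)" using sa strict_sorted_iff by blast
    have setA: "set (ls @ rs) = Gm P" using GP sls srs by simp
    have cG: "card (Gm P) = 2 * s" using distinct_card[OF dA] setA sls srs by simp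
    have fG: "finite (Gm P)" using GP fL by simp
    have sG: "sorted_list_of_set (Gm P) = ls @ rs"
    proof -
      have "length (ls @ rs) = card (Gm P)" using cG sls srs by simp
      then show ?thesis using sorted_list_of_set_unique[OF fG, of "ls @ rs"] sa setA by blast
    qed
    have "Fm s (Gm P) = P" unfolding Fm_def Let_def sG cG using sls srs Pz by simp
    then show ?thesis using GK cG by simp
  next
    case False
    then obtain p where p: "p \<in> L" "p \<in> R" by blast
    obtain ls' x where lsx: "ls = ls' @ [x]" using ls_ne by (metis rev_exhaust)
    obtain y rs' where rsy: "rs = y # rs'" using rs_ne by (metis list.exhaust)
    have x1: "\<forall>z \<in> set ls'. z < x" using sls(1) unfolding lsx sorted_wrt_append by simp
    have y1: "\<forall>z \<in> set rs'. y < z" using srs(1) unfolding rsy by simp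
    have xL: "x \<in> L" using sls(2) lsx by auto
    have yR: "y \<in> R" using srs(2) rsy by auto
    have "p \<le> x" using p(1) x1 sls(2) lsx by force
    moreover have "y \<le> p" using p(2) y1 srs(2) rsy by force
    moreover have "x \<le> y" using LR xL yR by blast
    ultimately have xy: "x = y" by simp
    have sa: "sorted_wrt (<) (ls' @ x # rs')"
      unfolding sorted_wrt_append using sls(1) srs(1) x1 y1 xy unfolding lsx rsy sorted_wrt_append
      by force
    have dA: "distinct (ls' @ x # rs')" using sa strict_sorted_iff by blast
    have setA: "set (ls' @ x # rs') = Gm P" using GP sls(2) srs(2) lsx rsy xy by auto
    have lens: "length ls' = s - 1" "length rs' = s - 1" using sls(3) srs(3) lsx rsy by auto
    have cG: "card (Gm P) = 2 * s - 1" using distinct_card[OF dA] setA lens s1 by simp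
    have fG: "finite (Gm P)" using GP fL by simp
    have sG: "sorted_list_of_set (Gm P) = ls' @ x # rs'"
      using sorted_list_of_set_unique[OF fG, of "ls' @ x # rs'"] sa setA distinct_card[OF dA] by metis
    have tk: "take s (ls' @ x # rs') = ls" using lens s1 lsx by (simp add: take_append)
    have dr: "drop (2 * s - 1 - s) (ls' @ x # rs') = rs" using lens s1 rsy xy by simp
    have "Fm s (Gm P) = P" unfolding Fm_def Let_def sG cG tk dr using Pz by simp
    then show ?thesis using GK cG by simp
  qed
qed

lemma card_good:
  assumes K: "finite K" and s1: "1 \<le> s"
  shows "card (good K s) = (card K choose (2 * s)) + (card K choose (2 * s - 1))"
proof -
  define T where "T = {S. S \<subseteq> K \<and> (card S = 2*s \<or> card S = 2*s - 1)}"
  have "bij_betw Gm (good K s) T"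
  proof (rule bij_betw_byWitness[where f' = "Fm s"])
    show "\<forall>a\<in>good K s. Fm s (Gm a) = a" using Gm_props[OF K _ s1] by blast
    show "\<forall>a'\<in>T. Gm (Fm s a') = a'" using Fm_props[OF K _ s1] unfolding T_def by blast
    show "Gm ` good K s \<subseteq> T" using Gm_props[OF K _ s1] unfolding T_def by blast
    show "Fm s ` T \<subseteq> good K s" using Fm_props[OF K _ s1] unfolding T_def by blast
  qed
  then have "card (good K s) = card T" by (rule bij_betw_same_card)
  also have "T = {S. S \<subseteq> K \<and> card S = 2*s} \<union> {S. S \<subseteq> K \<and> card S = 2*s - 1}"
    unfolding T_def by blast
  also have "card \<dots> = card {S. S \<subseteq> K \<and> card S = 2*s} + card {S. S \<subseteq> K \<and> card S = 2*s - 1}"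
  proof (rule card_Un_disjoint)
    show "finite {S. S \<subseteq> K \<and> card S = 2*s}" using K by simp
    show "finite {S. S \<subseteq> K \<and> card S = 2*s - 1}" using K by simp
    show "{S. S \<subseteq> K \<and> card S = 2*s} \<inter> {S. S \<subseteq> K \<and> card S = 2*s - 1} = {}" using s1 by auto
  qed
  also have "\<dots> = (card K choose (2 * s)) + (card K choose (2 * s - 1))"
    using n_subsets[OF K] by simp
  finally show ?thesis .
qed

lemma good_zero: "finite K \<Longrightarrow> good K 0 = {{}}"
proof -
  assume K: "finite K"
  have "P = {}" if "P \<in> good K 0" for P
    using good_finite[OF K that] good_D(2)[OF that] by simp
  moreover have "{} \<in> good K 0" unfolding good_def by simp
  ultimately show ?thesis by blast
qed

lemma card_AsJ_good:
  assumes J: "J \<subseteq> {1..n}"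
  shows "card (AsJ n s J) = card (good ({1..n} - J) s)"
proof -
  have "inj_on aimg (good ({1..n} - J) s)"
  proof (rule inj_on_subset)
    show "inj_on aimg (Pow {(i,j). i \<le> j})"
      using inj_on_image_Pow[OF inj_alpha] unfolding aimg_def[abs_def] .
    show "good ({1..n} - J) s \<subseteq> Pow {(i,j). i \<le> j}" using good_D(1) by blast
  qed
  then show ?thesis unfolding charac[OF J] by (rule card_image)
qed

lemma good_mono: "P \<in> good K s \<Longrightarrow> K \<subseteq> K' \<Longrightarrow> P \<in> good K' s"
  unfolding good_def by blast

lemma good_restrict:
  assumes "P \<in> good K' s" "\<And>i j. (i,j) \<in> P \<Longrightarrow> i \<in> K \<and> j \<in> K"
  shows "P \<in> good K s"
proof -
  have "P \<subseteq> {(i,j). i \<in> K \<and> j \<in> K \<and> i \<le> j}" using good_D(1)[OF assms(1)] assms(2) by blast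
  then show ?thesis using good_D[OF assms(1)] unfolding good_def by blast
qed

lemma binom_sum_aux:
  "(\<Sum>t\<le>N. ((m::nat) choose (2*t)) + (if t = 0 then 0 else m choose (2*t - 1))) = (\<Sum>k<2*N+1. m choose k)"
proof (induction N)
  case 0 then show ?case by simp
next
  case (Suc N)
  have "(\<Sum>k<2*Suc N+1. m choose k) = (\<Sum>k<2*N+1. m choose k) + (m choose (2*N+1)) + (m choose (2*N+2))"
    by simp
  then show ?case using Suc by simp
qed

lemma binom_sum_aux2: "(\<Sum>k<m+1+j. (m::nat) choose k) = 2^m"
proof (induction j)
  case 0 then show ?case using choose_row_sum[of m] by (simp add: lessThan_Suc_atMost)
next
  case (Suc j) then show ?case by simp
qed

theorem mainTheorem7:
  fixes n s :: nat and J :: "nat set"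
  assumes "J \<subseteq> {1..n}"
  shows "(s \<ge> 1 \<longrightarrow>
           AsJ n s J = {A \<in> AsJ n s {}. \<forall>i j. alpha i j \<in> A \<longrightarrow> i \<notin> J \<and> j \<notin> J})
       \<and> (s \<ge> 1 \<longrightarrow>
           card (AsJ n s J) = ((n - card J) choose (2 * s)) + ((n - card J) choose (2 * s - 1)))
       \<and> ((\<lambda>t. real (card (AsJ n t J))) sums (2 ^ (n - card J)))"
proof -
  note J = assms
  define K where "K = {1..n} - J"
  have fJ: "finite J" using J finite_subset by blast
  have fK: "finite K" unfolding K_def by simp
  have cK: "card K = n - card J" unfolding K_def using card_Diff_subset[OF fJ J] by simp
  have J0: "({} :: nat set) \<subseteq> {1..n}" by simp
  have ch0: "AsJ n s {} = aimg ` good {1..n} s" using charac[OF J0] by simp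
  have chJ: "AsJ n s J = aimg ` good K s" using charac[OF J] unfolding K_def .
  have P1: "AsJ n s J = {A \<in> AsJ n s {}. \<forall>i j. alpha i j \<in> A \<longrightarrow> i \<notin> J \<and> j \<notin> J}"
  proof
    show "AsJ n s J \<subseteq> {A \<in> AsJ n s {}. \<forall>i j. alpha i j \<in> A \<longrightarrow> i \<notin> J \<and> j \<notin> J}"
    proof
      fix A assume "A \<in> AsJ n s J"
      then have "A \<in> aimg ` good K s" unfolding chJ .
      then obtain P where AP: "A = aimg P" and G: "P \<in> good K s" by (rule imageE)
      have "P \<in> good {1..n} s" using good_mono[OF G] unfolding K_def by blast
      then have "A \<in> AsJ n s {}" unfolding ch0 AP by (rule imageI)
      moreover have "i \<notin> J \<and> j \<notin> J" if "alpha i j \<in> A" for i j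
      proof -
        have "alpha i j \<in> aimg P" using that AP by simp
        then obtain a b where ab: "(a,b) \<in> P" "alpha i j = alpha a b" unfolding aimg_mem by blast
        have "a \<in> K" "b \<in> K" "a \<le> b" using good_D(1)[OF G] ab(1) by auto
        moreover have "i = a \<and> j = b" using alpha_eq[OF \<open>a \<le> b\<close> ab(2)] .
        ultimately show ?thesis unfolding K_def by simp
      qed
      ultimately show "A \<in> {A \<in> AsJ n s {}. \<forall>i j. alpha i j \<in> A \<longrightarrow> i \<notin> J \<and> j \<notin> J}"
        by (intro CollectI conjI allI impI) auto
    qed
    show "{A \<in> AsJ n s {}. \<forall>i j. alpha i j \<in> A \<longrightarrow> i \<notin> J \<and> j \<notin> J} \<subseteq> AsJ n s J"
    proof
      fix A assume A: "A \<in> {A \<in> AsJ n s {}. \<forall>i j. alpha i j \<in> A \<longrightarrow> i \<notin> J \<and> j \<notin> J}"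
      then have A0: "A \<in> aimg ` good {1..n} s" and Aend: "\<forall>i j. alpha i j \<in> A \<longrightarrow> i \<notin> J \<and> j \<notin> J"
        unfolding ch0 by simp_all
      from A0 obtain P where AP: "A = aimg P" and G: "P \<in> good {1..n} s" by (rule imageE)
      have "P \<in> good K s"
      proof (rule good_restrict[OF G])
        fix i j assume ij: "(i,j) \<in> P"
        then have "alpha i j \<in> A" unfolding AP aimg_mem by blast
        then have "i \<notin> J \<and> j \<notin> J" using Aend by blast
        moreover have "i \<in> {1..n} \<and> j \<in> {1..n}" using good_D(1)[OF G] ij by auto
        ultimately show "i \<in> K \<and> j \<in> K" unfolding K_def by simp
      qed
      then show "A \<in> AsJ n s J" unfolding chJ AP by (rule imageI)
    qed
  qed
  have cardJ: "card (AsJ n t J) = card (good K t)" for t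
    using card_AsJ_good[OF J] unfolding K_def .
  define m where "m = n - card J"
  define h where "h t = (m choose (2*t)) + (if t = 0 then 0 else m choose (2*t - 1))" for t
  have ht: "card (AsJ n t J) = h t" for t
  proof (cases "t = 0")
    case True
    then show ?thesis unfolding cardJ h_def using good_zero[OF fK] by simp
  next
    case False
    then show ?thesis unfolding cardJ h_def m_def using card_good[OF fK, of t] cK by simp
  qed
  have P3: "(\<lambda>t. real (card (AsJ n t J))) sums (2 ^ (n - card J))"
  proof -
    have "(\<lambda>t. real (h t)) sums (\<Sum>t\<in>{..m}. real (h t))"
    proof (rule sums_finite)
      fix t assume "t \<notin> {..m}"
      then have "m < 2*t" "m < 2*t - 1" by auto
      then have z1: "m choose (2*t) = 0" and z2: "m choose (2*t - 1) = 0" by (simp_all add: binomial_eq_0)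
      show "real (h t) = 0" unfolding h_def z1 z2 by simp
    qed simp
    moreover have "(\<Sum>t\<in>{..m}. real (h t)) = 2 ^ m"
    proof -
      have "(\<Sum>t\<in>{..m}. h t) = (\<Sum>k<2*m+1. m choose k)" unfolding h_def by (rule binom_sum_aux)
      also have "\<dots> = 2 ^ m" using binom_sum_aux2[of m m] by (simp add: mult_2)
      finally show ?thesis by (metis of_nat_sum of_nat_numeral of_nat_power)
    qed
    ultimately show ?thesis using ht unfolding m_def by simp
  qed
  have P2: "s \<ge> 1 \<longrightarrow> card (AsJ n s J) = ((n - card J) choose (2 * s)) + ((n - card J) choose (2 * s - 1))"
    using card_good[OF fK, of s] cK cardJ by simp
  show ?thesis using P1 P2 P3 by blast
qed

end
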